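(* Let $R$ be a run of a distributed program $\Pi$ and let $X$ be an agent (module) of $\Pi$ that is immediate in $R$. Then (1) the set of moments $t\ge0$ at which $X$ is enabled is discrete (has no limit point in $[0,\infty)$); (2) if $X$ is enabled at a moment $t$, then $X$ is disabled at $t+$ (i.e. on some interval $(t,t+\epsilon)$) and, if $t>0$, at $t-$ (i.e. on some interval $(t-\epsilon,t)$).
   Context: A distributed program $\Pi$ is given by a vocabulary $\Upsilon$ (containing a universe symbol Reals, interpreted as the real numbers, and not containing the nullary symbol $\mathrm{CT}$) together with a finite set of modules; each module is a rule built from update rules, conditionals, blocks and parallel declarations, and is executed by its own agent. Executing a module at a state means computing the set of updates (location, new value) it generates and performing them simultaneously; an inconsistent update set does nothing. A module is enabled at a state if its update set is consistent and contains at least one update that changes the state, and disabled otherwise. Function symbols are static, internal (changed only by executing modules) or external (changed only by the environment). States are structures of vocabulary $\Upsilon\cup\{\mathrm{CT}\}$ with $\mathrm{CT}$ real. A pre-run is a map $t\mapsto R(t)$, $t\in[0,\infty)$, to states with a common superuniverse, $\mathrm{CT}=t$ in $R(t)$, and such that, writing $\rho(t)$ for the reduct of $R(t)$ to $\Upsilon$, for every $\tau>0$ there are $0=t_0<\dots<t_n=\tau$ with $\rho$ constant on each $(t_i,t_{i+1})$; $\rho(t+)$, $\rho(t-)$ denote the one-sided constant values. A pre-run is a run of $\Pi$ if (i) whenever $\rho(t+)\ne\rho(t)$, $\rho(t+)$ is the $\Upsilon$-reduct of the state obtained by executing some modules $M_1,\dots,M_k$ at $R(t)$ (these agents are said to fire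 at $t$), and external functions agree in $\rho(t)$ and $\rho(t+)$; (ii) whenever $t>0$ and $\rho(t)\neq\rho(t-)$, they differ only in external functions. An agent is immediate (in $R$) if it fires at every moment at which it is enabled. *)

theory Defs
  imports "HOL-Analysis.Analysis"
begin

text \<open>Function symbols of the vocabulary Upsilon are the elements of the type 'f;
  the extra nullary symbol CT (current time) is added by the type constructor sym.\<close>
datatype 'f sym = Sym 'f | CT

datatype fkind = Static | Internal | External

datatype 'a val = RealV real | TrueV | FalseV | UndefV | Atom 'a

type_synonym ('f,'a) state = "'f sym \<Rightarrow> 'a val list \<Rightarrow> 'a val"
type_synonym ('f,'a) ustate = "'f \<Rightarrow> 'a val list \<Rightarrow> 'a val"

datatype ('f,'v) trm =
    Var 'v
  | App "'f sym" "('f,'v) trm list"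
  | TrueT | FalseT | UndefT
  | Eq "('f,'v) trm" "('f,'v) trm"
  | Neg "('f,'v) trm"
  | Conj "('f,'v) trm" "('f,'v) trm"

text \<open>Rules: update rules, conditionals, blocks and parallel declarations
  (do for all v in universe U: R).\<close>
datatype ('f,'v) rule =
    Skip
  | Upd 'f "('f,'v) trm list" "('f,'v) trm"
  | Cond "('f,'v) trm" "('f,'v) rule" "('f,'v) rule"
  | Block "('f,'v) rule list"
  | Par 'v 'f "('f,'v) rule"

record ('f,'v) program =
  arity :: "'f \<Rightarrow> nat"
  kind :: "'f \<Rightarrow> fkind"
  reals_sym :: 'f
  modules :: "('f,'v) rule set"

fun bool_val :: "bool \<Rightarrow> 'a val" where
  "bool_val b = (if b then TrueV else FalseV)"

fun eval :: "('f,'a) state \<Rightarrow> ('v \<Rightarrow> 'a val) \<Rightarrow> ('f,'v) trm \<Rightarrow> 'a val" where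
  "eval I \<nu> (Var v) = \<nu> v"
| "eval I \<nu> (App f ts) = I f (map (eval I \<nu>) ts)"
| "eval I \<nu> TrueT = TrueV"
| "eval I \<nu> FalseT = FalseV"
| "eval I \<nu> UndefT = UndefV"
| "eval I \<nu> (Eq s t) = bool_val (eval I \<nu> s = eval I \<nu> t)"
| "eval I \<nu> (Neg s) = bool_val (eval I \<nu> s \<noteq> TrueV)"
| "eval I \<nu> (Conj s t) = bool_val (eval I \<nu> s = TrueV \<and> eval I \<nu> t = TrueV)"

type_synonym ('f,'a) update = "'f \<times> 'a val list \<times> 'a val"

fun updates :: "('f,'a) state \<Rightarrow> ('v \<Rightarrow> 'a val) \<Rightarrow> ('f,'v) rule \<Rightarrow> ('f,'a) update set" where
  "updates I \<nu> Skip = {}"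
| "updates I \<nu> (Upd f ts t) = {(f, map (eval I \<nu>) ts, eval I \<nu> t)}"
| "updates I \<nu> (Cond g r1 r2) =
     (if eval I \<nu> g = TrueV then updates I \<nu> r1 else updates I \<nu> r2)"
| "updates I \<nu> (Block rs) = (\<Union>r\<in>set rs. updates I \<nu> r)"
| "updates I \<nu> (Par v U r) =
     (\<Union>x\<in>{x. I (Sym U) [x] = TrueV}. updates I (\<nu>(v := x)) r)"

text \<open>Modules are closed rules; they are evaluated in the empty environment.\<close>
definition module_updates :: "('f,'a) state \<Rightarrow> ('f,'v) rule \<Rightarrow> ('f,'a) update set" where
  "module_updates I M = updates I (\<lambda>_. UndefV) M"

definition consistent :: "('f,'a) update set \<Rightarrow> bool" where
  "consistent U \<longleftrightarrow> (\<forall>f args v w. (f,args,v) \<in> U \<longrightarrow> (f,args,w) \<in> U \<longrightarrow> v = w)"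

definition fire_updates :: "('f,'a) update set \<Rightarrow> ('f,'a) state \<Rightarrow> ('f,'a) state" where
  "fire_updates U I =
     (if consistent U then
        (\<lambda>g args. case g of
            Sym f \<Rightarrow> (if \<exists>v. (f,args,v) \<in> U then (THE v. (f,args,v) \<in> U) else I g args)
          | CT \<Rightarrow> I g args)
      else I)"

definition exec :: "('f,'v) rule set \<Rightarrow> ('f,'a) state \<Rightarrow> ('f,'a) state" where
  "exec S I = fire_updates (\<Union>M\<in>S. module_updates I M) I"

definition enabled :: "('f,'v) rule \<Rightarrow> ('f,'a) state \<Rightarrow> bool" where
  "enabled M I \<longleftrightarrow> consistent (module_updates I M) \<and>
     (\<exists>f args v. (f,args,v) \<in> module_updates I M \<and> I (Sym f) args \<noteq> v)"

definition reduct :: "('f,'a) state \<Rightarrow> ('f,'a) ustate" where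
  "reduct I = (\<lambda>f. I (Sym f))"

fun rule_wf :: "('f,'v) program \<Rightarrow> ('f,'v) rule \<Rightarrow> bool" where
  "rule_wf P Skip = True"
| "rule_wf P (Upd f ts t) = (kind P f = Internal \<and> length ts = arity P f)"
| "rule_wf P (Cond g r1 r2) = (rule_wf P r1 \<and> rule_wf P r2)"
| "rule_wf P (Block rs) = (\<forall>r\<in>set rs. rule_wf P r)"
| "rule_wf P (Par v U r) = (arity P U = 1 \<and> rule_wf P r)"

definition program_wf :: "('f,'v) program \<Rightarrow> bool" where
  "program_wf P \<longleftrightarrow> finite (modules P) \<and> arity P (reals_sym P) = 1 \<and>
     kind P (reals_sym P) = Static \<and> (\<forall>M\<in>modules P. rule_wf P M)"

definition is_state :: "('f,'v) program \<Rightarrow> ('f,'a) state \<Rightarrow> bool" where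
  "is_state P I \<longleftrightarrow>
     (\<forall>f args. length args \<noteq> arity P f \<longrightarrow> I (Sym f) args = UndefV) \<and>
     (\<forall>args. args \<noteq> [] \<longrightarrow> I CT args = UndefV) \<and>
     (\<exists>r. I CT [] = RealV r) \<and>
     (\<forall>x. I (Sym (reals_sym P)) [x] = (if \<exists>r. x = RealV r then TrueV else FalseV))"

type_synonym ('f,'a) prerun = "real \<Rightarrow> ('f,'a) state"

definition rho :: "('f,'a) prerun \<Rightarrow> real \<Rightarrow> ('f,'a) ustate" where
  "rho R t = reduct (R t)"

definition rho_plus :: "('f,'a) prerun \<Rightarrow> real \<Rightarrow> ('f,'a) ustate" where
  "rho_plus R t = (THE \<sigma>. \<exists>\<epsilon>>0. \<forall>s\<in>{t<..<t+\<epsilon>}. rho R s = \<sigma>)"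

definition rho_minus :: "('f,'a) prerun \<Rightarrow> real \<Rightarrow> ('f,'a) ustate" where
  "rho_minus R t = (THE \<sigma>. \<exists>\<epsilon>>0. \<forall>s\<in>{t-\<epsilon><..<t}. rho R s = \<sigma>)"

definition pre_run :: "('f,'v) program \<Rightarrow> ('f,'a) prerun \<Rightarrow> bool" where
  "pre_run P R \<longleftrightarrow>
     (\<forall>t\<ge>0. is_state P (R t) \<and> R t CT [] = RealV t) \<and>
     (\<forall>\<tau>>0. \<exists>(ts::nat \<Rightarrow> real) n. ts 0 = 0 \<and> ts n = \<tau> \<and>
        (\<forall>i<n. ts i < ts (Suc i)) \<and>
        (\<forall>i<n. \<forall>s\<in>{ts i<..<ts (Suc i)}. \<forall>s'\<in>{ts i<..<ts (Suc i)}. rho R s = rho R s'))"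

definition is_run :: "('f,'v) program \<Rightarrow> ('f,'a) prerun \<Rightarrow> bool" where
  "is_run P R \<longleftrightarrow> pre_run P R \<and>
     (\<forall>t\<ge>0. rho_plus R t \<noteq> rho R t \<longrightarrow>
        (\<exists>S\<subseteq>modules P. rho_plus R t = reduct (exec S (R t))) \<and>
        (\<forall>f. kind P f = External \<longrightarrow> rho R t f = rho_plus R t f)) \<and>
     (\<forall>t>0. rho R t \<noteq> rho_minus R t \<longrightarrow>
        (\<forall>f. kind P f \<noteq> External \<longrightarrow> rho R t f = rho_minus R t f))"

definition fires :: "('f,'v) program \<Rightarrow> ('f,'a) prerun \<Rightarrow> ('f,'v) rule \<Rightarrow> real \<Rightarrow> bool" where
  "fires P R X t \<longleftrightarrow> rho_plus R t \<noteq> rho R t \<and>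
     (\<exists>S\<subseteq>modules P. X \<in> S \<and> rho_plus R t = reduct (exec S (R t)))"

definition immediate :: "('f,'v) program \<Rightarrow> ('f,'a) prerun \<Rightarrow> ('f,'v) rule \<Rightarrow> bool" where
  "immediate P R X \<longleftrightarrow> (\<forall>t\<ge>0. enabled X (R t) \<longrightarrow> fires P R X t)"

end

theory Submission
  imports Defs
begin

lemma rho_plus_interior:
  assumes "a < t" "t < b" "\<forall>s\<in>{a<..<b}. \<forall>s'\<in>{a<..<b}. rho R s = rho R s'"
  shows "rho_plus R t = rho R t"
  unfolding rho_plus_def
proof (rule the_equality)
  have "\<forall>s\<in>{t<..<t+(b-t)}. rho R s = rho R t"
  proof
    fix s assume "s \<in> {t<..<t+(b-t)}"
    then have "s \<in> {a<..<b}" "t \<in> {a<..<b}" using assms(1,2) by auto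
    then show "rho R s = rho R t" using assms(3) by blast
  qed
  moreover have "b - t > 0" using assms(2) by simp
  ultimately show "\<exists>\<epsilon>>0. \<forall>s\<in>{t<..<t+\<epsilon>}. rho R s = rho R t" by blast
next
  fix \<sigma> assume "\<exists>\<epsilon>>0. \<forall>s\<in>{t<..<t+\<epsilon>}. rho R s = \<sigma>"
  then obtain e where e: "e > 0" "\<forall>s\<in>{t<..<t+e}. rho R s = \<sigma>" by blast
  define m where "m = min e (b - t)"
  define s where "s = t + m / 2"
  have m: "m > 0" "m \<le> e" "m \<le> b - t"
    using e(1) assms(2) by (auto simp: m_def)
  have "t < s" "s < t + e" "a < s" "s < b" using m assms(1,2) by (simp_all add: s_def)
  then have s1: "s \<in> {t<..<t+e}" and s2: "s \<in> {a<..<b}" by auto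
  have t2: "t \<in> {a<..<b}" using assms(1,2) by simp
  have "rho R s = \<sigma>" using e(2) s1 by blast
  moreover have "rho R s = rho R t" using assms(3) s2 t2 by blast
  ultimately show "\<sigma> = rho R t" by simp
qed

lemma cover:
  assumes "\<forall>i<n. (ts::nat\<Rightarrow>real) i < ts (Suc i)" "ts 0 \<le> t" "t < ts n"
  shows "\<exists>i<n. t = ts i \<or> (ts i < t \<and> t < ts (Suc i))"
  using assms
proof (induction n)
  case 0 then show ?case by simp
next
  case (Suc n)
  show ?case
  proof (cases "t < ts n")
    case True
    then obtain i where "i<n" "t = ts i \<or> (ts i < t \<and> t < ts (Suc i))"
      using Suc by auto
    then show ?thesis by (intro exI[of _ i]) auto
  next
    case False
    then have "ts n \<le> t" by simp
    moreover have "t < ts (Suc n)" using Suc.prems by simp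
    ultimately have "t = ts n \<or> (ts n < t \<and> t < ts (Suc n))" by auto
    then show ?thesis by blast
  qed
qed

lemma finite_enabled:
  assumes "is_run P R" "immediate P R X"
  shows "finite {t. 0 \<le> t \<and> t \<le> B \<and> enabled X (R t)}"
proof -
  have pr: "pre_run P R" using assms(1) by (simp add: is_run_def)
  define \<tau> where "\<tau> = max B 0 + 1"
  have "\<tau> > 0" by (simp add: \<tau>_def)
  then obtain ts n where ts: "(ts::nat\<Rightarrow>real) 0 = 0" "ts n = \<tau>" "\<forall>i<n. ts i < ts (Suc i)"
    "\<forall>i<n. \<forall>s\<in>{ts i<..<ts (Suc i)}. \<forall>s'\<in>{ts i<..<ts (Suc i)}. rho R s = rho R s'"
    using pr unfolding pre_run_def by blast
  have "{t. 0 \<le> t \<and> t \<le> B \<and> enabled X (R t)} \<subseteq> ts ` {..n}"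
  proof
    fix t assume "t \<in> {t. 0 \<le> t \<and> t \<le> B \<and> enabled X (R t)}"
    then have t: "0 \<le> t" "t \<le> B" "enabled X (R t)" by auto
    have "fires P R X t" using assms(2) t unfolding immediate_def by blast
    then have ne: "rho_plus R t \<noteq> rho R t" by (simp add: fires_def)
    have "t < ts n" using t ts(2) by (simp add: \<tau>_def)
    then obtain i where i: "i<n" "t = ts i \<or> (ts i < t \<and> t < ts (Suc i))"
      using cover[of n ts t] ts t by auto
    show "t \<in> ts ` {..n}"
    proof (cases "t = ts i")
      case True then show ?thesis using i by auto
    next
      case False
      then have "ts i < t" "t < ts (Suc i)" using i by auto
      then have "rho_plus R t = rho R t" using rho_plus_interior ts(4) i(1) by blast
      then show ?thesis using ne by simp
    qed
  qed
  then show ?thesis by (rule finite_subset) simp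
qed

theorem mainTheorem2:
  fixes P :: "('f,'v) program" and R :: "('f,'a) prerun" and X :: "('f,'v) rule"
  assumes "program_wf P"
    and "is_run P R"
    and "X \<in> modules P"
    and "immediate P R X"
  shows "(\<forall>x\<ge>0. \<not> x islimpt {t. t \<ge> 0 \<and> enabled X (R t)})
     \<and> (\<forall>t\<ge>0. enabled X (R t) \<longrightarrow>
          (\<exists>\<epsilon>>0. \<forall>s\<in>{t<..<t+\<epsilon>}. \<not> enabled X (R s)) \<and>
          (t > 0 \<longrightarrow> (\<exists>\<epsilon>>0. \<forall>s\<in>{t-\<epsilon><..<t}. \<not> enabled X (R s))))"
proof -
  let ?S = "{t. t \<ge> 0 \<and> enabled X (R t)}"
  have nl: "\<not> x islimpt ?S" for x :: real
  proof
    assume "x islimpt ?S"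
    have fin: "finite {t. 0 \<le> t \<and> t \<le> x + 1 \<and> enabled X (R t)}"
      using finite_enabled[OF assms(2,4)] .
    have "?S \<inter> ball x 1 \<subseteq> {t. 0 \<le> t \<and> t \<le> x + 1 \<and> enabled X (R t)}"
      by (auto simp: dist_real_def)
    then have "finite (?S \<inter> ball x 1)" using fin by (rule finite_subset)
    moreover have "infinite (?S \<inter> ball x 1)"
      using \<open>x islimpt ?S\<close> unfolding islimpt_eq_infinite_ball by simp
    ultimately show False by simp
  qed
  have loc: "\<exists>e>0. \<forall>s. s \<ge> 0 \<longrightarrow> s \<noteq> t \<longrightarrow> dist s t < e \<longrightarrow> \<not> enabled X (R s)" for t
  proof -
    have "\<not> (\<forall>e>0. \<exists>x'\<in>?S. x' \<noteq> t \<and> dist x' t < e)"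
      using nl[of t] unfolding islimpt_approachable .
    then obtain e where "e > 0" "\<forall>x'\<in>?S. \<not> (x' \<noteq> t \<and> dist x' t < e)" by blast
    then show ?thesis by (metis (mono_tags, lifting) mem_Collect_eq)
  qed
  have part2: "(\<exists>\<epsilon>>0. \<forall>s\<in>{t<..<t+\<epsilon>}. \<not> enabled X (R s)) \<and>
          (t > 0 \<longrightarrow> (\<exists>\<epsilon>>0. \<forall>s\<in>{t-\<epsilon><..<t}. \<not> enabled X (R s)))" if "t \<ge> 0" for t
  proof -
    obtain e where e: "e > 0" "\<And>s. s \<ge> 0 \<Longrightarrow> s \<noteq> t \<Longrightarrow> dist s t < e \<Longrightarrow> \<not> enabled X (R s)"
      using loc by blast
    have A: "\<forall>s\<in>{t<..<t+e}. \<not> enabled X (R s)"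
    proof
      fix s assume s: "s \<in> {t<..<t+e}"
      show "\<not> enabled X (R s)"
      proof (rule e(2))
        show "s \<ge> 0" using s that by simp
        show "s \<noteq> t" using s by simp
        show "dist s t < e" using s by (simp add: dist_real_def)
      qed
    qed
    have B: "\<forall>s\<in>{t-min e t<..<t}. \<not> enabled X (R s)"
    proof
      fix s assume s: "s \<in> {t-min e t<..<t}"
      show "\<not> enabled X (R s)"
      proof (rule e(2))
        have "min e t \<le> t" "min e t \<le> e" by simp_all
        then show "s \<ge> 0" "s \<noteq> t" "dist s t < e" using s by (auto simp: dist_real_def)
      qed
    qed
    have "min e t > 0" if "t > 0" using e(1) that by simp
    then show ?thesis using A B e(1) by blast
  qed
  show ?thesis
  proof (rule conjI)
    show "\<forall>x\<ge>0. \<not> x islimpt ?S" by (intro allI impI) (rule nl)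
  next
    show "\<forall>t\<ge>0. enabled X (R t) \<longrightarrow>
          (\<exists>\<epsilon>>0. \<forall>s\<in>{t<..<t+\<epsilon>}. \<not> enabled X (R s)) \<and>
          (t > 0 \<longrightarrow> (\<exists>\<epsilon>>0. \<forall>s\<in>{t-\<epsilon><..<t}. \<not> enabled X (R s)))"
    proof (intro allI impI)
      fix t :: real assume "t \<ge> 0"
      then show "(\<exists>\<epsilon>>0. \<forall>s\<in>{t<..<t+\<epsilon>}. \<not> enabled X (R s)) \<and>
          (t > 0 \<longrightarrow> (\<exists>\<epsilon>>0. \<forall>s\<in>{t-\<epsilon><..<t}. \<not> enabled X (R s)))"
        by (rule part2)
    qed
  qed
qed

end
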